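(* Let $\mathcal S\subseteq\mathcal X\cup\mathcal Y\cup\mathcal Z$ be a set of items with $w_Z(\mathcal S)\le t-1$, $w_Y(\mathcal S)\le T$, $p_Z(\mathcal S)\ge t-1$, $p_Y(\mathcal S)\ge T$, and such that there is no set $\mathcal S'\subseteq\mathcal X\cup\mathcal Y\cup\mathcal Z$ with $w(\mathcal S')\le w(\mathcal S)$ and $p(\mathcal S')>p(\mathcal S)$. Then there exists $i\in\{0,\dots,t-1\}$ with $\mathcal S\cap\mathcal Y=\mathcal Y_i$ and $\mathcal S\cap\mathcal Z=\mathcal Z_i$.
   Context: Let $n\ge1$, $B_n=\sum_{j=1}^{3n}(3n+1)^j$, $\widetilde{\mathcal A}_n=\{(3n+1)^{j_1}+(3n+1)^{j_2}+(3n+1)^{j_3}: j_1,j_2,j_3\in\{1,\dots,3n\}\}$. Let $t$ be a power of two, $\lg$ the base-2 logarithm, and for $i\in\{0,\dots,t-1\}$ let $\mathcal A_i=\{a^i_1,\dots,a^i_{3n}\}$ be a set of $3n$ integers from $\widetilde{\mathcal A}_n$ with sum $3B_n$. Let $X=3tnB_n$, $B=B_n+nX$, $Y=3t^2nB$, $Z=(\lg t)^2Y^2 3^{(\lg t)^2}$, $T=\sum_{k=0}^{(\lg t)^2-1}3^k$, and fix a bijection $f:\{0,\dots,\lg t-1\}^2\to\{0,\dots,(\lg t)^2-1\}$. Items (weight $w$, profit $p$): encoding items $x^i_j$ ($0\le i\le t-1$, $1\le j\le 3n$) with $w=X+a^i_j$, $p=X+a^i_j+3iB$, forming $\mathcal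 X$; quadratization items forming $\mathcal Y$: for $0\le k<\ell\le\lg t-1$, $y^{1,0}_{k,\ell}$ with $w=p=3^{f(k,\ell)}Y$, $y^{0,1}_{k,\ell}$ with $w=p=3^{f(\ell,k)}Y$, $y^{1,1}_{k,\ell}$ with $w=(3^{f(k,\ell)}+3^{f(\ell,k)})Y$, $p=w+2^{k+\ell}\cdot9nB$, and for $0\le k\le\lg t-1$, $y^{1,1}_{k,k}$ with $w=3^{f(k,k)}Y$, $p=w+2^{2k}\cdot4.5nB+2^k\cdot1.5nB$; index items forming $\mathcal Z$: for $0\le k\le\lg t-1$, $z^0_k$ with $w=p=2^kZ+\sum_{\ell=0}^{\lg t-1}3^{f(k,\ell)}Y$ and $z^1_k$ with $w=p=2^kZ+2^k\cdot 3B$. For a set $\mathcal S$ of items, $w(\mathcal S)=\sum_{x\in\mathcal S}w(x)$, $p(\mathcal S)=\sum_{x\in\mathcal S}p(x)$. For an item $x$: $w_Z(x)=\lfloor w(x)/Z\rfloor$, $p_Z(x)=\lfloor p(x)/Z\rfloor$, $w_Y(x)=\lfloor (w(x)-Z\,w_Z(x))/Y\rfloor$, $p_Y(x)=\lfloor (p(x)-Z\,p_Z(x))/Y\rfloor$; these are extended to sets of items by summation over the items. For $i\in\{0,\dots,t-1\}$ with binary digits $i(0),\dots,i(\lg t-1)$ ($i=\sum_k i(k)2^k$): $\mathcal Z_i=\{z^{i(k)}_k:0\le k\le\lg t-1\}$ and $\mathcal Y_i=\{y^{i(k),i(\ell)}_{k,\ell}:0\le k\le\ell\le\lg t-1,\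 (i(k),i(\ell))\neq(0,0)\}$. *)

theory Defs
  imports Main "HOL.Real"
begin

text \<open>Items of the knapsack instance.
  XI i j   = x^i_j;
  YI b c k l = y^{b,c}_{k,l};
  ZI b k   = z^b_k.\<close>
datatype item = XI nat nat | YI nat nat nat nat | ZI nat nat

definition Bn :: "nat \<Rightarrow> nat" where
  "Bn n = (\<Sum>j=1..3*n. (3*n+1)^j)"

definition Atilde :: "nat \<Rightarrow> nat set" where
  "Atilde n = {(3*n+1)^j1 + (3*n+1)^j2 + (3*n+1)^j3 | j1 j2 j3.
                 j1 \<in> {1..3*n} \<and> j2 \<in> {1..3*n} \<and> j3 \<in> {1..3*n}}"

definition Xc :: "nat \<Rightarrow> nat \<Rightarrow> nat" where
  "Xc n L = 3 * 2^L * n * Bn n"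

definition Bc :: "nat \<Rightarrow> nat \<Rightarrow> nat" where
  "Bc n L = Bn n + n * Xc n L"

definition Yc :: "nat \<Rightarrow> nat \<Rightarrow> nat" where
  "Yc n L = 3 * (2^L)^2 * n * Bc n L"

definition Zc :: "nat \<Rightarrow> nat \<Rightarrow> nat" where
  "Zc n L = L^2 * (Yc n L)^2 * 3^(L^2)"

definition Tc :: "nat \<Rightarrow> nat" where
  "Tc L = (\<Sum>k<L^2. 3^k)"

definition Xset :: "nat \<Rightarrow> nat \<Rightarrow> item set" where
  "Xset n L = {XI i j | i j. i < 2^L \<and> j \<in> {1..3*n}}"

definition Yset :: "nat \<Rightarrow> item set" where
  "Yset L = {YI 1 0 k l | k l. k < l \<and> l < L}
          \<union> {YI 0 1 k l | k l. k < l \<and> l < L}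
          \<union> {YI 1 1 k l | k l. k < l \<and> l < L}
          \<union> {YI 1 1 k k | k. k < L}"

definition Zset :: "nat \<Rightarrow> item set" where
  "Zset L = {ZI b k | b k. b \<in> {0,1} \<and> k < L}"

text \<open>Weight and profit (values outside the instance are irrelevant and set to 0).\<close>
fun wt :: "nat \<Rightarrow> nat \<Rightarrow> (nat \<Rightarrow> nat \<Rightarrow> nat) \<Rightarrow> (nat \<times> nat \<Rightarrow> nat) \<Rightarrow> item \<Rightarrow> real" where
  "wt n L a f (XI i j) = real (Xc n L) + real (a i j)"
| "wt n L a f (YI b c k l) =
     (if b = 1 \<and> c = 0 then 3^(f (k,l)) * real (Yc n L)
      else if b = 0 \<and> c = 1 then 3^(f (l,k)) * real (Yc n L)
      else if b = 1 \<and> c = 1 \<and> k < l then (3^(f (k,l)) + 3^(f (l,k))) * real (Yc n L)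
      else if b = 1 \<and> c = 1 \<and> k = l then 3^(f (k,k)) * real (Yc n L)
      else 0)"
| "wt n L a f (ZI b k) =
     (if b = 0 then 2^k * real (Zc n L) + (\<Sum>l<L. 3^(f (k,l)) * real (Yc n L))
      else if b = 1 then 2^k * real (Zc n L) + 2^k * 3 * real (Bc n L)
      else 0)"

fun pr :: "nat \<Rightarrow> nat \<Rightarrow> (nat \<Rightarrow> nat \<Rightarrow> nat) \<Rightarrow> (nat \<times> nat \<Rightarrow> nat) \<Rightarrow> item \<Rightarrow> real" where
  "pr n L a f (XI i j) = real (Xc n L) + real (a i j) + 3 * real i * real (Bc n L)"
| "pr n L a f (YI b c k l) =
     (if b = 1 \<and> c = 1 \<and> k < l then
        wt n L a f (YI b c k l) + 2^(k+l) * 9 * real n * real (Bc n L)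
      else if b = 1 \<and> c = 1 \<and> k = l then
        wt n L a f (YI b c k l) + 2^(2*k) * 4.5 * real n * real (Bc n L)
                                + 2^k * 1.5 * real n * real (Bc n L)
      else wt n L a f (YI b c k l))"
| "pr n L a f (ZI b k) = wt n L a f (ZI b k)"

definition wZ :: "nat \<Rightarrow> nat \<Rightarrow> (nat \<Rightarrow> nat \<Rightarrow> nat) \<Rightarrow> (nat \<times> nat \<Rightarrow> nat) \<Rightarrow> item \<Rightarrow> int" where
  "wZ n L a f x = \<lfloor>wt n L a f x / real (Zc n L)\<rfloor>"

definition pZ :: "nat \<Rightarrow> nat \<Rightarrow> (nat \<Rightarrow> nat \<Rightarrow> nat) \<Rightarrow> (nat \<times> nat \<Rightarrow> nat) \<Rightarrow> item \<Rightarrow> int" where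
  "pZ n L a f x = \<lfloor>pr n L a f x / real (Zc n L)\<rfloor>"

definition wY :: "nat \<Rightarrow> nat \<Rightarrow> (nat \<Rightarrow> nat \<Rightarrow> nat) \<Rightarrow> (nat \<times> nat \<Rightarrow> nat) \<Rightarrow> item \<Rightarrow> int" where
  "wY n L a f x = \<lfloor>(wt n L a f x - real (Zc n L) * of_int (wZ n L a f x)) / real (Yc n L)\<rfloor>"

definition pY :: "nat \<Rightarrow> nat \<Rightarrow> (nat \<Rightarrow> nat \<Rightarrow> nat) \<Rightarrow> (nat \<times> nat \<Rightarrow> nat) \<Rightarrow> item \<Rightarrow> int" where
  "pY n L a f x = \<lfloor>(pr n L a f x - real (Zc n L) * of_int (pZ n L a f x)) / real (Yc n L)\<rfloor>"

definition bitd :: "nat \<Rightarrow> nat \<Rightarrow> nat" where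
  "bitd i k = (i div 2^k) mod 2"

definition Zi :: "nat \<Rightarrow> nat \<Rightarrow> item set" where
  "Zi L i = {ZI (bitd i k) k | k. k < L}"

definition Yi :: "nat \<Rightarrow> nat \<Rightarrow> item set" where
  "Yi L i = {YI (bitd i k) (bitd i l) k l | k l.
               k \<le> l \<and> l < L \<and> (bitd i k, bitd i l) \<noteq> (0, 0)}"

end

theory Submission
  imports Defs
begin

lemma digits_one:
  fixes b :: nat
  assumes "b \<ge> 2"
  shows "(\<forall>k<N. c k \<le> b) \<Longrightarrow> (\<Sum>k<N. c k * b^k) = (\<Sum>k<N. b^k) \<Longrightarrow> \<forall>k<N. c k = 1"
proof (induction N arbitrary: c)
  case 0
  then show ?case by simp
next
  case (Suc N)
  have e: "c 0 + b * (\<Sum>k<N. c (Suc k) * b^k) = 1 + b * (\<Sum>k<N. b^k)"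
    using Suc.prems(2) by (simp add: sum.lessThan_Suc_shift sum_distrib_left mult.assoc mult.left_commute del: sum.lessThan_Suc)
  have m1: "(1 + b * (\<Sum>k<N. b^k)) mod b = 1" using assms
    by (metis mod_mult_self2 mod_less one_less_numeral_iff semiring_norm(76) less_le_trans mult.commute)
  have m: "c 0 mod b = 1" using arg_cong[OF e, of "\<lambda>x. x mod b"] m1 by simp
  moreover have "c 0 \<le> b" using Suc.prems(1) by auto
  ultimately have c0: "c 0 = 1"
  proof (cases "c 0 = b")
    case True
    then show ?thesis using m by simp
  next
    case False
    then have "c 0 < b" using \<open>c 0 \<le> b\<close> by simp
    then show ?thesis using m by simp
  qed
  then have "b * (\<Sum>k<N. c (Suc k) * b^k) = b * (\<Sum>k<N. b^k)" using e by linarith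
  then have "(\<Sum>k<N. c (Suc k) * b^k) = (\<Sum>k<N. b^k)" using assms by simp
  moreover have "\<forall>k<N. c (Suc k) \<le> b" using Suc.prems(1) by simp
  ultimately have r: "\<forall>k<N. c (Suc k) = 1" using Suc.IH[of "\<lambda>k. c (Suc k)"] by blast
  show ?case
  proof (intro allI impI)
    fix k assume k: "k < Suc N"
    show "c k = 1"
    proof (cases k)
      case 0 then show ?thesis using c0 by simp
    next
      case (Suc m) then show ?thesis using r k by simp
    qed
  qed
qed

lemma sum_pow2: "(\<Sum>k<N. (2::nat)^k) = 2^N - 1"
  by (induction N) auto

lemma sum_pow3: "2 * (\<Sum>k<N. (3::nat)^k) + 1 = 3^N"
  by (induction N) auto

lemma bits_sum:
  "(\<forall>k. b k \<le> (1::nat)) \<Longrightarrow> (\<Sum>k<N. b k * 2^k) < 2^N \<and> (\<forall>k<N. bitd (\<Sum>k<N. b k * 2^k) k = b k)"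
proof (induction N arbitrary: b)
  case 0
  then show ?case by simp
next
  case (Suc N)
  define r where "r = (\<Sum>k<N. b (Suc k) * 2^k)"
  have e: "(\<Sum>k<Suc N. b k * 2^k) = b 0 + 2 * r"
    unfolding r_def by (simp add: sum.lessThan_Suc_shift sum_distrib_left mult.assoc mult.left_commute del: sum.lessThan_Suc)
  from Suc.IH[of "\<lambda>k. b (Suc k)"] Suc.prems have ih: "r < 2^N" "\<forall>k<N. bitd r k = b (Suc k)"
    unfolding r_def by auto
  have b0: "b 0 \<le> 1" using Suc.prems by auto
  have "b 0 + 2 * r < 2^Suc N" using ih(1) b0 by simp
  moreover have "\<forall>k<Suc N. bitd (b 0 + 2 * r) k = b k"
  proof (intro allI impI)
    fix k assume k: "k < Suc N"
    show "bitd (b 0 + 2 * r) k = b k"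
    proof (cases k)
      case 0
      then show ?thesis using b0 by (auto simp: bitd_def)
    next
      case (Suc m)
      have "(b 0 + 2 * r) div 2 ^ k = ((b 0 + 2*r) div 2) div 2^m" by (simp add: Suc div_mult2_eq)
      also have "(b 0 + 2*r) div 2 = r" using b0 by auto
      finally show ?thesis using ih(2) Suc k by (simp add: bitd_def)
    qed
  qed
  ultimately show ?case using e by simp
qed

lemma card3:
  assumes "a \<noteq> b" "a \<noteq> c" "b \<noteq> c" "card (S \<inter> {a,b,c}) = 1"
  shows "(a \<in> S \<or> b \<in> S \<or> c \<in> S) \<and> \<not>(a \<in> S \<and> b \<in> S) \<and> \<not>(a \<in> S \<and> c \<in> S) \<and> \<not>(b \<in> S \<and> c \<in> S)"
proof -
  obtain x where x: "S \<inter> {a,b,c} = {x}" using assms(4) card_1_singletonE by blast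
  have u: "y = x" if "y \<in> S" "y \<in> {a,b,c}" for y
  proof -
    have "y \<in> S \<inter> {a,b,c}" using that by (rule IntI)
    then show ?thesis unfolding x by simp
  qed
  have "x \<in> S \<inter> {a,b,c}" unfolding x by simp
  then have "x \<in> S" "x = a \<or> x = b \<or> x = c" by simp_all
  then have 1: "a \<in> S \<or> b \<in> S \<or> c \<in> S" by metis
  have 2: "\<not>(a \<in> S \<and> b \<in> S)" using u[of a] u[of b] assms(1) by blast
  have 3: "\<not>(a \<in> S \<and> c \<in> S)" using u[of a] u[of c] assms(2) by blast
  have 4: "\<not>(b \<in> S \<and> c \<in> S)" using u[of b] u[of c] assms(3) by blast
  show ?thesis using 1 2 3 4 by blast
qed

lemma card2:
  assumes "a \<noteq> b" "card (S \<inter> {a,b}) = 1"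
  shows "(a \<in> S \<longleftrightarrow> b \<notin> S)"
proof -
  obtain x where x: "S \<inter> {a,b} = {x}" using assms(2) card_1_singletonE by blast
  have u: "y = x" if "y \<in> S" "y \<in> {a,b}" for y
  proof -
    have "y \<in> S \<inter> {a,b}" using that by (rule IntI)
    then show ?thesis unfolding x by simp
  qed
  have "x \<in> S \<inter> {a,b}" unfolding x by simp
  then have "x \<in> S" "x = a \<or> x = b" by simp_all
  then have 1: "a \<in> S \<or> b \<in> S" by metis
  have 2: "\<not>(a \<in> S \<and> b \<in> S)" using u[of a] u[of b] assms(1) by blast
  show ?thesis using 1 2 by blast
qed

lemma double_count:
  fixes g :: "'a \<Rightarrow> nat" and h :: "'b \<Rightarrow> nat"
  assumes "finite S" "finite P" "\<And>x. x \<in> S \<Longrightarrow> g x = (\<Sum>p\<in>P. if x \<in> C p then h p else 0)"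
  shows "(\<Sum>x\<in>S. g x) = (\<Sum>p\<in>P. card (S \<inter> C p) * h p)"
proof -
  have "(\<Sum>x\<in>S. g x) = (\<Sum>x\<in>S. \<Sum>p\<in>P. if x \<in> C p then h p else 0)"
    by (rule sum.cong[OF refl], rule assms(3), assumption)
  also have "\<dots> = (\<Sum>p\<in>P. \<Sum>x\<in>S. if x \<in> C p then h p else 0)" by (rule sum.swap)
  also have "\<dots> = (\<Sum>p\<in>P. card (S \<inter> C p) * h p)"
  proof (rule sum.cong[OF refl])
    fix p
    have "(\<Sum>x\<in>S. if x \<in> C p then h p else 0) = (\<Sum>x\<in>S \<inter> C p. h p)"
      using assms(1) by (simp add: sum.inter_filter[symmetric] Int_def conj_commute)
    also have "\<dots> = card (S \<inter> C p) * h p" by simp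
    finally show "(\<Sum>x\<in>S. if x \<in> C p then h p else 0) = card (S \<inter> C p) * h p" .
  qed
  finally show ?thesis .
qed


definition Dk :: "nat \<Rightarrow> item set" where "Dk k = {ZI 0 k, ZI 1 k}"
definition Cv :: "nat \<times> nat \<Rightarrow> item set" where
  "Cv p = (case p of (k,l) \<Rightarrow> if k < l then {ZI 0 k, YI 1 0 k l, YI 1 1 k l}
     else if l < k then {ZI 0 k, YI 0 1 l k, YI 1 1 l k} else {ZI 0 k, YI 1 1 k k})"
definition zc :: "nat \<Rightarrow> item \<Rightarrow> nat" where
  "zc L x = (\<Sum>k<L. if x \<in> Dk k then 2^k else 0)"
definition yc :: "nat \<Rightarrow> (nat \<times> nat \<Rightarrow> nat) \<Rightarrow> item \<Rightarrow> nat" where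
  "yc L f x = (\<Sum>p\<in>{..<L}\<times>{..<L}. if x \<in> Cv p then 3^(f p) else 0)"

lemma Cv_mem: "x \<in> Cv (k',l') \<longleftrightarrow> (x = ZI 0 k' \<or> (k'<l' \<and> (x = YI 1 0 k' l' \<or> x = YI 1 1 k' l'))
   \<or> (l'<k' \<and> (x = YI 0 1 l' k' \<or> x = YI 1 1 l' k')) \<or> (k'=l' \<and> x = YI 1 1 k' k'))"
  by (auto simp: Cv_def)

lemma filt_eq: "(\<And>k' l'. (k',l') \<in> A \<longleftrightarrow> (k',l') \<in> B) \<Longrightarrow> A = B"
  by auto

lemma zc_Z: "b \<le> 1 \<Longrightarrow> k < L \<Longrightarrow> zc L (ZI b k) = 2^k"
proof -
  assume b: "b \<le> 1" and k: "k < L"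
  have "zc L (ZI b k) = (\<Sum>k'<L. if k = k' then 2^k' else 0)"
    unfolding zc_def Dk_def using b by (intro sum.cong) auto
  also have "\<dots> = 2^k" using k by simp
  finally show ?thesis .
qed
lemma zc_X: "zc L (XI i j) = 0" by (simp add: zc_def Dk_def)
lemma zc_Y: "zc L (YI b c k l) = 0" by (simp add: zc_def Dk_def)

lemma yc_filter: "yc L f x = (\<Sum>p\<in>{p\<in>{..<L}\<times>{..<L}. x \<in> Cv p}. 3^(f p))"
  unfolding yc_def by (simp add: sum.inter_filter)

lemma yc_X: "yc L f (XI i j) = 0"
  unfolding yc_def by (intro sum.neutral) (auto simp: Cv_def split: prod.splits)
lemma yc_Z1: "yc L f (ZI 1 k) = 0"
  unfolding yc_def by (intro sum.neutral) (auto simp: Cv_def split: prod.splits)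

lemma yc_Z0: "yc L f (ZI 0 k) = (if k < L then (\<Sum>l<L. 3^(f(k,l))) else 0)"
proof -
  have "{p\<in>{..<L}\<times>{..<L}. ZI 0 k \<in> Cv p} = (if k < L then (\<lambda>l. (k,l)) ` {..<L} else {})"
  proof (cases "k < L")
    case True
    show ?thesis
    proof (rule set_eqI)
      fix p :: "nat \<times> nat"
      obtain k' l' where p: "p = (k',l')" by fastforce
      show "p \<in> {p\<in>{..<L}\<times>{..<L}. ZI 0 k \<in> Cv p} \<longleftrightarrow> p \<in> (if k < L then (\<lambda>l. (k,l)) ` {..<L} else {})"
        unfolding p using True by (auto simp: Cv_def)
    qed
  qed (auto simp: Cv_def split: prod.splits if_splits)
  then show ?thesis unfolding yc_filter by (simp add: sum.reindex inj_on_def)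
qed

lemma yc_Y10: "k < l \<Longrightarrow> l < L \<Longrightarrow> yc L f (YI 1 0 k l) = 3^(f(k,l))"
proof -
  assume "k < l" "l < L"
  then have "{p\<in>{..<L}\<times>{..<L}. YI 1 0 k l \<in> Cv p} = {(k,l)}"
    by (intro filt_eq) (auto simp: Cv_mem)
  then show ?thesis unfolding yc_filter by simp
qed
lemma yc_Y01: "k < l \<Longrightarrow> l < L \<Longrightarrow> yc L f (YI 0 1 k l) = 3^(f(l,k))"
proof -
  assume "k < l" "l < L"
  then have "{p\<in>{..<L}\<times>{..<L}. YI 0 1 k l \<in> Cv p} = {(l,k)}"
    by (intro filt_eq) (auto simp: Cv_mem)
  then show ?thesis unfolding yc_filter by simp
qed
lemma yc_Y11: "k < l \<Longrightarrow> l < L \<Longrightarrow> yc L f (YI 1 1 k l) = 3^(f(k,l)) + 3^(f(l,k))"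
proof -
  assume "k < l" "l < L"
  then have "{p\<in>{..<L}\<times>{..<L}. YI 1 1 k l \<in> Cv p} = {(k,l),(l,k)}"
    by (intro filt_eq) (auto simp: Cv_mem)
  then show ?thesis unfolding yc_filter using \<open>k < l\<close> by simp
qed
lemma yc_Y11d: "k < L \<Longrightarrow> yc L f (YI 1 1 k k) = 3^(f(k,k))"
proof -
  assume "k < L"
  then have "{p\<in>{..<L}\<times>{..<L}. YI 1 1 k k \<in> Cv p} = {(k,k)}"
    by (intro filt_eq) (auto simp: Cv_mem)
  then show ?thesis unfolding yc_filter by simp
qed

lemma yc_le: "yc L f x \<le> (\<Sum>p\<in>{..<L}\<times>{..<L}. 3^(f p))"
  unfolding yc_def by (intro sum_mono) auto

lemma T_reindex:
  assumes "bij_betw f ({..<L} \<times> {..<L}) {..<L^2}"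
  shows "(\<Sum>p\<in>{..<L}\<times>{..<L}. g (f p)) = (\<Sum>m<L^2. g m)"
  using sum.reindex_bij_betw[OF assms, of g] by simp


lemma Bn_ge: "n \<ge> 1 \<Longrightarrow> Bn n \<ge> 1"
proof -
  assume n: "n \<ge> 1"
  have "(3*n+1)^1 \<le> Bn n" unfolding Bn_def
    by (rule member_le_sum) (use n in auto)
  then show ?thesis by simp
qed

lemma pow_le_Bn: "j \<in> {1..3*n} \<Longrightarrow> (3*n+1)^j \<le> Bn n"
  unfolding Bn_def by (rule member_le_sum) auto

lemma Atilde_le: "x \<in> Atilde n \<Longrightarrow> x \<le> 3 * Bn n"
proof -
  assume "x \<in> Atilde n"
  then obtain j1 j2 j3 where x: "x = (3*n+1)^j1 + (3*n+1)^j2 + (3*n+1)^j3"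
    and j: "j1 \<in> {1..3*n}" "j2 \<in> {1..3*n}" "j3 \<in> {1..3*n}"
    unfolding Atilde_def by blast
  have "x \<le> Bn n + Bn n + Bn n" unfolding x using pow_le_Bn[OF j(1)] pow_le_Bn[OF j(2)] pow_le_Bn[OF j(3)]
    by (intro add_mono)
  then show ?thesis by simp
qed

lemma Bc_ge: "n \<ge> 1 \<Longrightarrow> Xc n L \<le> Bc n L \<and> Bn n \<le> Bc n L \<and> Bc n L \<ge> 1"
proof -
  assume n: "n \<ge> 1"
  have "1 * Xc n L \<le> n * Xc n L" using n by (rule mult_le_mono1)
  then have h: "Xc n L \<le> n * Xc n L" by (simp only: mult_1)
  have "Bn n \<ge> 1" using Bn_ge[OF n] .
  then show ?thesis unfolding Bc_def using h by linarith
qed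

lemma X_bound:
  assumes n: "n \<ge> 1" and L: "L \<ge> 1" and i: "i < 2^L" and a: "x \<le> 3 * Bn n"
  shows "Xc n L + x + 3 * i * Bc n L < Yc n L"
proof -
  define t where "t = (2::nat)^L"
  have t2: "t \<ge> 2" unfolding t_def using L by (metis power_increasing power_one_right nat_le_linear one_le_numeral le_antisym le_trans)
  have B: "Xc n L \<le> Bc n L" "Bn n \<le> Bc n L" "Bc n L \<ge> 1" using Bc_ge[OF n] by auto
  have "Xc n L + x + 3 * i * Bc n L \<le> Bc n L + 3 * Bc n L + 3 * i * Bc n L"
    using B a by simp
  also have "\<dots> = (4 + 3 * i) * Bc n L" by (simp add: algebra_simps)
  also have "\<dots> < (3 * t^2 * n) * Bc n L"
  proof (rule mult_strict_right_mono)
    have it: "i < t" using i t_def by simp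
    have "4 + 3 * i \<le> 3 * t + 1" using it by linarith
    also have "\<dots> < 3 * t * t"
    proof -
      have "3*t*2 \<le> 3*t*t" using t2 by (intro mult_le_mono2)
      then show ?thesis using t2 by linarith
    qed
    also have "\<dots> \<le> 3 * t^2 * n" using n by (simp add: power2_eq_square)
    finally show "4 + 3 * i < 3 * t^2 * n" .
  qed (use B in simp)
  also have "\<dots> = Yc n L" unfolding Yc_def t_def by simp
  finally show ?thesis .
qed

lemma Z1_bound:
  assumes n: "n \<ge> 1" and k: "k < L"
  shows "2^k * 3 * Bc n L < Yc n L"
proof -
  have B: "Bc n L \<ge> 1" using Bc_ge[OF n] by auto
  have "(2::nat)^k < 2^L" using k by simp
  also have "\<dots> \<le> (2^L)^2 * n" using n by (simp add: power2_eq_square)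
  finally have "2^k * (3 * Bc n L) < ((2^L)^2 * n) * (3 * Bc n L)"
    using B by (intro mult_strict_right_mono) auto
  then show ?thesis unfolding Yc_def by (simp add: algebra_simps)
qed

lemma Y11_bound:
  assumes n: "n \<ge> 1" and kl: "k < l" "l < L"
  shows "2^(k+l) * 9 * n * Bc n L < Yc n L"
proof -
  have B: "Bc n L \<ge> 1" using Bc_ge[OF n] by auto
  have "(2::nat)^(k+l) * 4 = 2^(k+l+2)" by (simp add: power_add)
  also have "\<dots> \<le> 2^(2*L)" using kl by (intro power_increasing) auto
  also have "\<dots> = (2^L)^2" by (metis power_mult mult.commute)
  finally have h4: "(2::nat)^(k+l) * 4 \<le> (2^L)^2" .
  have "(2::nat)^(k+l) * 3 < 2^(k+l) * 4" by simp
  then have "(2::nat)^(k+l) * 3 < (2^L)^2" using h4 by linarith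
  then have "(2^(k+l) * 3) * (3 * n * Bc n L) < (2^L)^2 * (3 * n * Bc n L)"
    using B n by (intro mult_strict_right_mono) auto
  then show ?thesis unfolding Yc_def by (simp add: algebra_simps)
qed

lemma Y11d_bound:
  assumes n: "n \<ge> 1" and k: "k < L"
  shows "2^(2*k) * 4.5 * real n * real (Bc n L) + 2^k * 1.5 * real n * real (Bc n L) < real (Yc n L)"
proof -
  have B: "real (Bc n L) \<ge> 1" using Bc_ge[OF n] by auto
  have "(2::real)^(Suc k) \<le> 2^L" using k by (intro power_increasing) auto
  then have p1: "(2::real)^k * 2 \<le> 2^L" by (simp add: mult.commute)
  have p0: "(1::real) \<le> 2^L" by simp
  have p2: "(2::real)^(2*k) * 4 \<le> (2^L)^2"
  proof -
    have "(2::real)^(2*k) = (2^k)^2" by (rule power_even_eq)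
    then have "(2::real)^(2*k) * 4 = (2^k * 2)^2" by (simp add: power2_eq_square)
    also have "\<dots> \<le> (2^L)^2" using p1 by (intro power_mono) auto
    finally show ?thesis .
  qed
  have p3: "(2::real)^L \<le> (2^L)^2" using p0 by (simp add: power2_eq_square)
  have "2^(2*k) * 4.5 + 2^k * 1.5 < 3 * ((2::real)^L)^2" using p1 p2 p3 p0 by linarith
  then have "(2^(2*k) * 4.5 + 2^k * 1.5) * (real n * real (Bc n L)) < (3 * ((2::real)^L)^2) * (real n * real (Bc n L))"
    using B n by (intro mult_strict_right_mono) auto
  then show ?thesis unfolding Yc_def by (simp add: algebra_simps)
qed

lemma Tc_lt: "Tc L + 1 \<le> 3^(L^2)"
proof -
  have h: "2 * (\<Sum>k<M. (3::nat)^k) + 1 = 3^M" for M by (induction M) auto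
  have "2 * Tc L + 1 = 3^(L^2)" unfolding Tc_def by (rule h)
  then show ?thesis by linarith
qed

lemma Z_bound:
  assumes n: "n \<ge> 1" and L: "L \<ge> 1" and y: "y \<le> Tc L"
  shows "(y + 1) * Yc n L \<le> Zc n L"
proof -
  have "(y+1) * Yc n L \<le> 3^(L^2) * Yc n L" using y Tc_lt[of L] by (intro mult_right_mono) auto
  also have "\<dots> \<le> 3^(L^2) * Yc n L * (L^2 * Yc n L)"
  proof -
    have B: "Bc n L \<ge> 1" using Bc_ge[OF n] by auto
    have "Yc n L \<ge> 1" unfolding Yc_def using n B by simp
    moreover have "L^2 \<ge> 1" using L by simp
    ultimately have "1 * 1 \<le> L^2 * Yc n L" by (intro mult_le_mono) 
    then have "L^2 * Yc n L \<ge> 1" by simp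
    then show ?thesis by simp
  qed
  also have "\<dots> = Zc n L" by (simp only: Zc_def power2_eq_square[of "Yc n L"] mult_ac)
  finally show ?thesis .
qed

lemma floor_lemma:
  fixes v Z Y :: real and zz yy :: nat
  assumes Y: "Y > 0" and r: "0 \<le> v - Z*zz - Y*yy" "v - Z*zz - Y*yy < Y" and Zb: "(yy+1)*Y \<le> Z"
  shows "\<lfloor>v / Z\<rfloor> = int zz" "\<lfloor>(v - Z * of_int (int zz)) / Y\<rfloor> = int yy"
proof -
  have y0: "0 \<le> Y * yy" using Y by simp
  have d1: "(yy+1)*Y = Y * yy + Y" by (simp add: algebra_simps)
  have Z: "Z > 0" using Y Zb y0 d1 by linarith
  have d2: "Z * (real zz+1) = Z * zz + Z" by (simp add: algebra_simps)
  have a1: "Z * zz \<le> v" using r y0 by linarith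
  have a2: "v < Z * (real zz + 1)" using r Zb d1 d2 by linarith
  have "real zz \<le> v / Z" using a1 Z by (simp add: pos_le_divide_eq mult.commute)
  moreover have "v / Z < real zz + 1" using a2 Z by (simp only: pos_divide_less_eq mult.commute)
  ultimately show "\<lfloor>v / Z\<rfloor> = int zz" by (simp add: floor_eq_iff)
  have b1: "Y * yy \<le> v - Z * zz" using r by linarith
  have d3: "Y * (real yy+1) = Y * yy + Y" by (simp add: algebra_simps)
  have b2: "v - Z * zz < Y * (real yy + 1)" using r d3 by linarith
  have "real yy \<le> (v - Z * zz) / Y" using b1 Y by (simp add: pos_le_divide_eq mult.commute)
  moreover have "(v - Z * zz) / Y < real yy + 1" using b2 Y by (simp only: pos_divide_less_eq mult.commute)
  ultimately show "\<lfloor>(v - Z * of_int (int zz)) / Y\<rfloor> = int yy" by (simp add: floor_eq_iff)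
qed


lemma item_rem:
  assumes n: "n \<ge> 1" and L: "L \<ge> 1"
    and A: "\<forall>i<2^L. \<forall>j\<in>{1..3*n}. a i j \<in> Atilde n"
    and x: "x \<in> Xset n L \<union> Yset L \<union> Zset L"
  shows "0 \<le> wt n L a f x - real (Zc n L) * zc L x - real (Yc n L) * yc L f x
       \<and> wt n L a f x - real (Zc n L) * zc L x - real (Yc n L) * yc L f x < real (Yc n L)
       \<and> 0 \<le> pr n L a f x - real (Zc n L) * zc L x - real (Yc n L) * yc L f x
       \<and> pr n L a f x - real (Zc n L) * zc L x - real (Yc n L) * yc L f x < real (Yc n L)"
proof -
  have Bpos: "Bc n L \<ge> 1" using Bc_ge[OF n] by auto
  have Ypos: "real (Yc n L) > 0" using Bpos n unfolding Yc_def by simp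
  consider (X) i j where "x = XI i j" "i < 2^L" "j \<in> {1..3*n}"
    | (Y10) k l where "x = YI 1 0 k l" "k < l" "l < L"
    | (Y01) k l where "x = YI 0 1 k l" "k < l" "l < L"
    | (Y11) k l where "x = YI 1 1 k l" "k < l" "l < L"
    | (Y11d) k where "x = YI 1 1 k k" "k < L"
    | (Z0) k where "x = ZI 0 k" "k < L"
    | (Z1) k where "x = ZI 1 k" "k < L"
    using x unfolding Xset_def Yset_def Zset_def by blast
  then show ?thesis
  proof cases
    case (X i j)
    have al: "a i j \<le> 3 * Bn n" using A X Atilde_le by blast
    have "Xc n L + a i j + 3 * i * Bc n L < Yc n L" using X_bound[OF n L X(2) al] .
    then have h: "real (Xc n L) + real (a i j) + 3 * real i * real (Bc n L) < real (Yc n L)"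
      by (metis of_nat_add of_nat_less_iff of_nat_mult of_nat_numeral)
    have h0: "0 \<le> 3 * real i * real (Bc n L)" by simp
    have e1: "wt n L a f x - real (Zc n L) * zc L x - real (Yc n L) * yc L f x = real (Xc n L) + real (a i j)"
      using X by (simp add: zc_X yc_X)
    have e2: "pr n L a f x - real (Zc n L) * zc L x - real (Yc n L) * yc L f x = real (Xc n L) + real (a i j) + 3 * real i * real (Bc n L)"
      using X by (simp add: zc_X yc_X)
    show ?thesis unfolding e1 e2 using h h0 by linarith
  next
    case (Y10 k l)
    have e1: "wt n L a f x - real (Zc n L) * zc L x - real (Yc n L) * yc L f x = 0"
      using Y10 yc_Y10[of k l L f] by (simp add: zc_Y mult.commute)
    have e2: "pr n L a f x = wt n L a f x" using Y10 by simp
    show ?thesis using e1 e2 Ypos by simp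
  next
    case (Y01 k l)
    have e1: "wt n L a f x - real (Zc n L) * zc L x - real (Yc n L) * yc L f x = 0"
      using Y01 yc_Y01[of k l L f] by (simp add: zc_Y mult.commute)
    have e2: "pr n L a f x = wt n L a f x" using Y01 by simp
    show ?thesis using e1 e2 Ypos by simp
  next
    case (Y11 k l)
    have "2^(k+l) * 9 * n * Bc n L < Yc n L" using Y11_bound[OF n Y11(2,3)] .
    then have "real (2^(k+l) * 9 * n * Bc n L) < real (Yc n L)" by (simp only: of_nat_less_iff)
    then have h: "2^(k+l) * 9 * real n * real (Bc n L) < real (Yc n L)" by simp
    have h0: "0 \<le> 2^(k+l) * 9 * real n * real (Bc n L)" by simp
    have e1: "wt n L a f x - real (Zc n L) * zc L x - real (Yc n L) * yc L f x = 0"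
      using Y11 yc_Y11[of k l L f] by (simp add: zc_Y algebra_simps)
    have e2: "pr n L a f x - real (Zc n L) * zc L x - real (Yc n L) * yc L f x = 2^(k+l) * 9 * real n * real (Bc n L)"
      using Y11 yc_Y11[of k l L f] by (simp add: zc_Y algebra_simps)
    have "real (Yc n L) > 0" using Bpos n unfolding Yc_def by simp
    then show ?thesis unfolding e1 e2 using h h0 by linarith
  next
    case (Y11d k)
    have h: "2^(2*k) * 4.5 * real n * real (Bc n L) + 2^k * 1.5 * real n * real (Bc n L) < real (Yc n L)"
      using Y11d_bound[OF n Y11d(2)] .
    have h0: "0 \<le> 2^(2*k) * 4.5 * real n * real (Bc n L) + 2^k * 1.5 * real n * real (Bc n L)" by simp
    have e1: "wt n L a f x - real (Zc n L) * zc L x - real (Yc n L) * yc L f x = 0"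
      using Y11d yc_Y11d[of k L f] by (simp add: zc_Y algebra_simps)
    have e2: "pr n L a f x - real (Zc n L) * zc L x - real (Yc n L) * yc L f x = 2^(2*k) * 4.5 * real n * real (Bc n L) + 2^k * 1.5 * real n * real (Bc n L)"
      using Y11d yc_Y11d[of k L f] by (simp add: zc_Y algebra_simps)
    have "real (Yc n L) > 0" using Bpos n unfolding Yc_def by simp
    then show ?thesis unfolding e1 e2 using h h0 by linarith
  next
    case (Z0 k)
    have zc: "zc L x = 2^k" using Z0 zc_Z[of 0 k L] by simp
    have yc: "real (yc L f x) * real (Yc n L) = (\<Sum>l<L. 3^(f (k,l)) * real (Yc n L))"
      using Z0 by (simp add: yc_Z0 sum_distrib_right)
    have "wt n L a f x = 2^k * real (Zc n L) + (\<Sum>l<L. 3^(f (k,l)) * real (Yc n L))"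
      using Z0 by simp
    then have "wt n L a f x - real (Zc n L) * zc L x - real (Yc n L) * yc L f x = 0"
      using zc yc by (simp add: mult.commute)
    moreover have "pr n L a f x = wt n L a f x" using Z0 by simp
    moreover have "real (Yc n L) > 0" using Bpos n unfolding Yc_def by simp
    ultimately show ?thesis by simp
  next
    case (Z1 k)
    have zc: "zc L x = 2^k" using Z1 zc_Z[of 1 k L] by simp
    have "2^k * 3 * Bc n L < Yc n L" using Z1_bound[OF n Z1(2)] .
    then have "real (2^k * 3 * Bc n L) < real (Yc n L)" by (simp only: of_nat_less_iff)
    then have h: "2^k * 3 * real (Bc n L) < real (Yc n L)" by simp
    have "wt n L a f x - real (Zc n L) * zc L x - real (Yc n L) * yc L f x = 2^k * 3 * real (Bc n L)"
      using Z1 zc yc_Z1[of L f k] by (simp add: mult.commute)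
    moreover have "pr n L a f x = wt n L a f x" using Z1 by simp
    moreover have "0 \<le> 2^k * 3 * real (Bc n L)" by simp
    ultimately show ?thesis using h by linarith
  qed
qed


lemma item_floor:
  assumes n: "n \<ge> 1" and L: "L \<ge> 1"
    and A: "\<forall>i<2^L. \<forall>j\<in>{1..3*n}. a i j \<in> Atilde n"
    and f: "bij_betw f ({..<L} \<times> {..<L}) {..<L^2}"
    and x: "x \<in> Xset n L \<union> Yset L \<union> Zset L"
  shows "wZ n L a f x = int (zc L x) \<and> pZ n L a f x = int (zc L x)
       \<and> wY n L a f x = int (yc L f x) \<and> pY n L a f x = int (yc L f x)"
proof -
  have Bpos: "Bc n L \<ge> 1" using Bc_ge[OF n] by auto
  have Ypos: "real (Yc n L) > 0" using Bpos n unfolding Yc_def by simp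
  have "yc L f x \<le> (\<Sum>p\<in>{..<L}\<times>{..<L}. 3^(f p))" by (rule yc_le)
  also have "\<dots> = Tc L" unfolding Tc_def using T_reindex[OF f, of "\<lambda>m. 3^m"] by simp
  finally have "(yc L f x + 1) * Yc n L \<le> Zc n L" by (rule Z_bound[OF n L])
  then have Zb: "real (yc L f x + 1) * real (Yc n L) \<le> real (Zc n L)"
    by (metis of_nat_le_iff of_nat_mult)
  note r = item_rem[OF n L A x, of f]
  have w: "\<lfloor>wt n L a f x / real (Zc n L)\<rfloor> = int (zc L x)"
     "\<lfloor>(wt n L a f x - real (Zc n L) * of_int (int (zc L x))) / real (Yc n L)\<rfloor> = int (yc L f x)"
    using floor_lemma[OF Ypos, of "wt n L a f x" "real (Zc n L)" "zc L x" "yc L f x"] r Zb by auto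
  have p: "\<lfloor>pr n L a f x / real (Zc n L)\<rfloor> = int (zc L x)"
     "\<lfloor>(pr n L a f x - real (Zc n L) * of_int (int (zc L x))) / real (Yc n L)\<rfloor> = int (yc L f x)"
    using floor_lemma[OF Ypos, of "pr n L a f x" "real (Zc n L)" "zc L x" "yc L f x"] r Zb by auto
  have "wZ n L a f x = int (zc L x)" unfolding wZ_def using w(1) .
  moreover have "pZ n L a f x = int (zc L x)" unfolding pZ_def using p(1) .
  moreover have "wY n L a f x = int (yc L f x)" unfolding wY_def \<open>wZ n L a f x = int (zc L x)\<close> using w(2) .
  moreover have "pY n L a f x = int (yc L f x)" unfolding pY_def \<open>pZ n L a f x = int (zc L x)\<close> using p(2) .
  ultimately show ?thesis by blast
qed

lemma finite_U: "finite (Xset n L \<union> Yset L \<union> Zset L)"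
proof -
  have "Xset n L \<subseteq> (\<lambda>(i,j). XI i j) ` ({..<2^L} \<times> {1..3*n})" unfolding Xset_def by auto
  then have 1: "finite (Xset n L)" by (rule finite_subset) auto
  have "Yset L \<subseteq> (\<lambda>(b,c,k,l). YI b c k l) ` ({0,1} \<times> {0,1} \<times> {..<L} \<times> {..<L})"
    unfolding Yset_def by (auto simp: image_iff)
  then have 2: "finite (Yset L)" by (rule finite_subset) auto
  have "Zset L \<subseteq> (\<lambda>(b,k). ZI b k) ` ({0,1} \<times> {..<L})" unfolding Zset_def by auto
  then have 3: "finite (Zset L)" by (rule finite_subset) auto
  show ?thesis using 1 2 3 by simp
qed

lemma card_Cv: "card (Cv p) \<le> 3"
  unfolding Cv_def by (auto simp: card_insert_if split: prod.splits)

lemma card_Dk: "card (Dk k) \<le> 2"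
  unfolding Dk_def by (auto simp: card_insert_if)


theorem lemma6:
  fixes n t L :: nat
    and a :: "nat \<Rightarrow> nat \<Rightarrow> nat"
    and f :: "nat \<times> nat \<Rightarrow> nat"
    and S :: "item set"
  assumes n: "n \<ge> 1"
    and t: "t = 2 ^ L"
    and A: "\<forall>i<t. (\<forall>j\<in>{1..3*n}. a i j \<in> Atilde n) \<and> inj_on (a i) {1..3*n}
                    \<and> (\<Sum>j=1..3*n. a i j) = 3 * Bn n"
    and f: "bij_betw f ({..<L} \<times> {..<L}) {..<L^2}"
    and S: "S \<subseteq> Xset n L \<union> Yset L \<union> Zset L"
    and wZS: "(\<Sum>x\<in>S. wZ n L a f x) \<le> int t - 1"
    and wYS: "(\<Sum>x\<in>S. wY n L a f x) \<le> int (Tc L)"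
    and pZS: "(\<Sum>x\<in>S. pZ n L a f x) \<ge> int t - 1"
    and pYS: "(\<Sum>x\<in>S. pY n L a f x) \<ge> int (Tc L)"
    and opt: "\<not> (\<exists>S'. S' \<subseteq> Xset n L \<union> Yset L \<union> Zset L
                 \<and> (\<Sum>x\<in>S'. wt n L a f x) \<le> (\<Sum>x\<in>S. wt n L a f x)
                 \<and> (\<Sum>x\<in>S'. pr n L a f x) > (\<Sum>x\<in>S. pr n L a f x))"
  shows "\<exists>i<t. S \<inter> Yset L = Yi L i \<and> S \<inter> Zset L = Zi L i"
proof (cases "L = 0")
  case True
  have "S \<inter> Yset L = Yi L 0" "S \<inter> Zset L = Zi L 0"
    using True by (auto simp: Yset_def Zset_def Yi_def Zi_def)
  moreover have "0 < t" using t by simp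
  ultimately show ?thesis by blast
next
  case False
  then have L: "L \<ge> 1" by simp
  define U where "U = Xset n L \<union> Yset L \<union> Zset L"
  define P where "P = {..<L} \<times> {..<L}"
  have A': "\<forall>i<2^L. \<forall>j\<in>{1..3*n}. a i j \<in> Atilde n" using A t by blast
  have finS: "finite S" using S finite_U finite_subset by blast
  have finP: "finite P" unfolding P_def by simp
  have fl: "\<And>x. x \<in> S \<Longrightarrow> wZ n L a f x = int (zc L x) \<and> pZ n L a f x = int (zc L x)
       \<and> wY n L a f x = int (yc L f x) \<and> pY n L a f x = int (yc L f x)"
    using item_floor[OF n L A' f] S by blast
  have "(\<Sum>x\<in>S. wZ n L a f x) = int (\<Sum>x\<in>S. zc L x)"
  proof -
    have "(\<Sum>x\<in>S. wZ n L a f x) = (\<Sum>x\<in>S. int (zc L x))" using fl by (intro sum.cong) auto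
    also have "\<dots> = int (\<Sum>x\<in>S. zc L x)" by (simp only: of_nat_sum)
    finally show ?thesis .
  qed
  moreover have "(\<Sum>x\<in>S. pZ n L a f x) = int (\<Sum>x\<in>S. zc L x)"
  proof -
    have "(\<Sum>x\<in>S. pZ n L a f x) = (\<Sum>x\<in>S. int (zc L x))" using fl by (intro sum.cong) auto
    also have "\<dots> = int (\<Sum>x\<in>S. zc L x)" by (simp only: of_nat_sum)
    finally show ?thesis .
  qed
  ultimately have "int (\<Sum>x\<in>S. zc L x) = int t - 1" using wZS pZS by linarith
  moreover have t1: "1 \<le> t" using t by simp
  ultimately have "int (\<Sum>x\<in>S. zc L x) = int (t - 1)" by (simp only: of_nat_diff[OF t1] of_nat_1)
  then have "(\<Sum>x\<in>S. zc L x) = t - 1" by (simp only: of_nat_eq_iff)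
  then have sZ: "(\<Sum>x\<in>S. zc L x) = 2^L - 1" using t by simp
  have "(\<Sum>x\<in>S. wY n L a f x) = int (\<Sum>x\<in>S. yc L f x)"
  proof -
    have "(\<Sum>x\<in>S. wY n L a f x) = (\<Sum>x\<in>S. int (yc L f x))" using fl by (intro sum.cong) auto
    also have "\<dots> = int (\<Sum>x\<in>S. yc L f x)" by (simp only: of_nat_sum)
    finally show ?thesis .
  qed
  moreover have "(\<Sum>x\<in>S. pY n L a f x) = int (\<Sum>x\<in>S. yc L f x)"
  proof -
    have "(\<Sum>x\<in>S. pY n L a f x) = (\<Sum>x\<in>S. int (yc L f x))" using fl by (intro sum.cong) auto
    also have "\<dots> = int (\<Sum>x\<in>S. yc L f x)" by (simp only: of_nat_sum)
    finally show ?thesis .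
  qed
  ultimately have sY: "(\<Sum>x\<in>S. yc L f x) = Tc L" using wYS pYS by linarith

  have dZ: "(\<Sum>x\<in>S. zc L x) = (\<Sum>k<L. card (S \<inter> Dk k) * 2^k)"
    by (rule double_count[OF finS, of "{..<L}" "zc L" Dk "\<lambda>k. 2^k"]) (simp_all add: zc_def)
  have dY: "(\<Sum>x\<in>S. yc L f x) = (\<Sum>p\<in>P. card (S \<inter> Cv p) * 3^(f p))"
    by (rule double_count[OF finS finP, of "yc L f" Cv "\<lambda>p. 3^(f p)"]) (simp add: yc_def P_def)

  have cZ: "\<forall>k<L. card (S \<inter> Dk k) = 1"
  proof (rule digits_one[of 2])
    show "\<forall>k<L. card (S \<inter> Dk k) \<le> 2"
    proof (intro allI impI)
      fix k
      have "card (S \<inter> Dk k) \<le> card (Dk k)" by (rule card_mono) (auto simp: Dk_def)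
      then show "card (S \<inter> Dk k) \<le> 2" using card_Dk[of k] by linarith
    qed
    show "(\<Sum>k<L. card (S \<inter> Dk k) * 2^k) = (\<Sum>k<L. 2^k)"
      by (simp only: dZ[symmetric] sZ sum_pow2)
  qed simp

  define g where "g = inv_into P f"
  define c where "c m = card (S \<inter> Cv (g m))" for m
  have gf: "\<And>p. p \<in> P \<Longrightarrow> g (f p) = p"
  proof -
    fix p assume "p \<in> P"
    then show "g (f p) = p" unfolding g_def P_def by (rule inv_into_f_f[OF bij_betw_imp_inj_on[OF f]])
  qed
  have cY0: "\<forall>m<L^2. c m = 1"
  proof (rule digits_one[of 3])
    have fin: "\<And>p. finite (Cv p)" unfolding Cv_def by (auto split: prod.splits)
    show "\<forall>m<L^2. c m \<le> 3"
    proof (intro allI impI)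
      fix m
      have "card (S \<inter> Cv (g m)) \<le> card (Cv (g m))" by (rule card_mono[OF fin]) auto
      then show "c m \<le> 3" unfolding c_def using card_Cv[of "g m"] by linarith
    qed
    have "(\<Sum>p\<in>P. card (S \<inter> Cv p) * 3^(f p)) = (\<Sum>p\<in>P. c (f p) * 3^(f p))"
      unfolding c_def using gf by simp
    also have "\<dots> = (\<Sum>m<L^2. c m * 3^m)"
      using T_reindex[OF f, of "\<lambda>m. c m * 3^m"] unfolding P_def by simp
    finally show "(\<Sum>m<L^2. c m * 3^m) = (\<Sum>m<L^2. 3^m)"
      using dY sY unfolding Tc_def by simp
  qed simp
  have cY: "\<And>p. p \<in> P \<Longrightarrow> card (S \<inter> Cv p) = 1"
  proof -
    fix p assume p: "p \<in> P"
    have "f p \<in> {..<L^2}" using bij_betwE[OF f] p unfolding P_def by blast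
    then have "f p < L^2" by simp
    then have "c (f p) = 1" using cY0 by blast
    then show "card (S \<inter> Cv p) = 1" unfolding c_def using gf p by simp
  qed

  define s where "s k = (ZI 1 k \<in> S)" for k
  define i :: nat where "i = (\<Sum>k<L. (if s k then 1 else 0) * 2^k)"
  have bs: "i < 2^L \<and> (\<forall>k<L. bitd i k = (if s k then 1 else 0))"
    unfolding i_def by (rule bits_sum) simp
  have bit: "\<And>k. k < L \<Longrightarrow> bitd i k = (if s k then 1 else 0)" using bs by blast

  have z: "\<And>k. k < L \<Longrightarrow> ZI 0 k \<in> S \<longleftrightarrow> \<not> s k"
  proof -
    fix k :: nat assume k: "k < L"
    have "card (S \<inter> {ZI 0 k, ZI 1 k}) = 1" using cZ k unfolding Dk_def by simp
    then have "ZI 0 k \<in> S \<longleftrightarrow> ZI 1 k \<notin> S" by (rule card2[rotated]) simp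
    then show "ZI 0 k \<in> S \<longleftrightarrow> \<not> s k" by (simp add: s_def)
  qed

  have c3: "\<And>k l. k < l \<Longrightarrow> l < L \<Longrightarrow>
      (ZI 0 k \<in> S \<or> YI 1 0 k l \<in> S \<or> YI 1 1 k l \<in> S) \<and> \<not>(ZI 0 k \<in> S \<and> YI 1 0 k l \<in> S)
      \<and> \<not>(ZI 0 k \<in> S \<and> YI 1 1 k l \<in> S) \<and> \<not>(YI 1 0 k l \<in> S \<and> YI 1 1 k l \<in> S)"
  proof -
    fix k l :: nat assume kl: "k < l" "l < L"
    have "card (S \<inter> Cv (k,l)) = 1" using cY kl unfolding P_def by simp
    then have "card (S \<inter> {ZI 0 k, YI 1 0 k l, YI 1 1 k l}) = 1" using kl unfolding Cv_def by simp
    then show "?thesis k l" by (rule card3[rotated 3]) auto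
  qed
  have c3': "\<And>k l. k < l \<Longrightarrow> l < L \<Longrightarrow>
      (ZI 0 l \<in> S \<or> YI 0 1 k l \<in> S \<or> YI 1 1 k l \<in> S) \<and> \<not>(ZI 0 l \<in> S \<and> YI 0 1 k l \<in> S)
      \<and> \<not>(ZI 0 l \<in> S \<and> YI 1 1 k l \<in> S) \<and> \<not>(YI 0 1 k l \<in> S \<and> YI 1 1 k l \<in> S)"
  proof -
    fix k l :: nat assume kl: "k < l" "l < L"
    have "card (S \<inter> Cv (l,k)) = 1" using cY kl unfolding P_def by simp
    then have "card (S \<inter> {ZI 0 l, YI 0 1 k l, YI 1 1 k l}) = 1" using kl unfolding Cv_def by simp
    then show "?thesis k l" by (rule card3[rotated 3]) auto
  qed
  have c2: "\<And>k. k < L \<Longrightarrow> ZI 0 k \<in> S \<longleftrightarrow> YI 1 1 k k \<notin> S"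
  proof -
    fix k :: nat assume k: "k < L"
    have "card (S \<inter> Cv (k,k)) = 1" using cY k unfolding P_def by simp
    then have "card (S \<inter> {ZI 0 k, YI 1 1 k k}) = 1" unfolding Cv_def by simp
    then show "?thesis k" by (rule card2[rotated]) simp
  qed

  have op: "\<And>k l. k < l \<Longrightarrow> l < L \<Longrightarrow> \<not> (YI 1 0 k l \<in> S \<and> YI 0 1 k l \<in> S)"
  proof
    fix k l :: nat assume kl: "k < l" "l < L" and both: "YI 1 0 k l \<in> S \<and> YI 0 1 k l \<in> S"
    define x1 where "x1 = YI 1 0 k l"
    define x2 where "x2 = YI 0 1 k l"
    define x3 where "x3 = YI 1 1 k l"
    have x1S: "x1 \<in> S" and x2S: "x2 \<in> S" using both unfolding x1_def x2_def by auto
    have x3S: "x3 \<notin> S" using c3[OF kl] both unfolding x3_def by blast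
    define R where "R = S - {x1} - {x2}"
    have x2R1: "x2 \<in> S - {x1}" using x2S unfolding x1_def x2_def by simp
    have finR: "finite R" unfolding R_def using finS by simp
    have x3R: "x3 \<notin> R" unfolding R_def using x3S by simp
    have split: "\<And>h :: item \<Rightarrow> real. (\<Sum>x\<in>S. h x) = h x1 + h x2 + (\<Sum>x\<in>R. h x)"
    proof -
      fix h :: "item \<Rightarrow> real"
      have "(\<Sum>x\<in>S. h x) = h x1 + (\<Sum>x\<in>S - {x1}. h x)" using finS x1S by (rule sum.remove)
      also have "(\<Sum>x\<in>S - {x1}. h x) = h x2 + (\<Sum>x\<in>R. h x)"
        unfolding R_def using finS x2R1 by (intro sum.remove) auto
      finally show "(\<Sum>x\<in>S. h x) = h x1 + h x2 + (\<Sum>x\<in>R. h x)" by simp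
    qed
    define S' where "S' = insert x3 R"
    have split': "\<And>h :: item \<Rightarrow> real. (\<Sum>x\<in>S'. h x) = h x3 + (\<Sum>x\<in>R. h x)"
      unfolding S'_def using finR x3R by simp
    have S'U: "S' \<subseteq> Xset n L \<union> Yset L \<union> Zset L"
    proof -
      have "x3 \<in> Yset L" unfolding x3_def Yset_def using kl by blast
      moreover have "R \<subseteq> S" unfolding R_def by blast
      ultimately show ?thesis unfolding S'_def using S by blast
    qed
    have w3: "wt n L a f x3 = wt n L a f x1 + wt n L a f x2"
      unfolding x1_def x2_def x3_def using kl by (simp add: algebra_simps)
    have p1: "pr n L a f x1 = wt n L a f x1" and p2: "pr n L a f x2 = wt n L a f x2"
      unfolding x1_def x2_def by simp_all
    have Bpos: "Bc n L \<ge> 1" using Bc_ge[OF n] by auto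
    have p3: "pr n L a f x3 = wt n L a f x3 + 2^(k+l) * 9 * real n * real (Bc n L)"
      unfolding x3_def using kl by simp
    have pos: "2^(k+l) * 9 * real n * real (Bc n L) > 0" using n Bpos by simp
    have "(\<Sum>x\<in>S'. wt n L a f x) \<le> (\<Sum>x\<in>S. wt n L a f x)"
      using split split' w3 by simp
    moreover have "(\<Sum>x\<in>S'. pr n L a f x) > (\<Sum>x\<in>S. pr n L a f x)"
      using split[of "pr n L a f"] split'[of "pr n L a f"] p1 p2 p3 w3 pos by simp
    ultimately show False using opt S'U by blast
  qed

  have y: "\<And>k l. k < l \<Longrightarrow> l < L \<Longrightarrow>
      (YI 1 0 k l \<in> S \<longleftrightarrow> s k \<and> \<not> s l) \<and> (YI 0 1 k l \<in> S \<longleftrightarrow> \<not> s k \<and> s l)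
      \<and> (YI 1 1 k l \<in> S \<longleftrightarrow> s k \<and> s l)"
  proof -
    fix k l :: nat assume kl: "k < l" "l < L"
    have zk: "ZI 0 k \<in> S \<longleftrightarrow> \<not> s k" using z kl by simp
    have zl: "ZI 0 l \<in> S \<longleftrightarrow> \<not> s l" using z kl by simp
    show "?thesis k l" using c3[OF kl] c3'[OF kl] op[OF kl] zk zl by blast
  qed
  have yd: "\<And>k. k < L \<Longrightarrow> YI 1 1 k k \<in> S \<longleftrightarrow> s k"
    using c2 z by blast

  have ZE: "S \<inter> Zset L = Zi L i"
  proof (rule set_eqI)
    fix x
    show "x \<in> S \<inter> Zset L \<longleftrightarrow> x \<in> Zi L i"
    proof
      assume x: "x \<in> S \<inter> Zset L"
      then obtain b k where xb: "x = ZI b k" "b \<in> {0,1}" "k < L" unfolding Zset_def by blast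
      have "b = bitd i k" using xb x bit[OF xb(3)] z[OF xb(3)] unfolding s_def by auto
      then show "x \<in> Zi L i" unfolding Zi_def using xb by blast
    next
      assume "x \<in> Zi L i"
      then obtain k where xk: "x = ZI (bitd i k) k" "k < L" unfolding Zi_def by blast
      show "x \<in> S \<inter> Zset L"
      proof (cases "s k")
        case True
        then show ?thesis using xk bit[OF xk(2)] unfolding s_def Zset_def by auto
      next
        case False
        then show ?thesis using xk bit[OF xk(2)] z[OF xk(2)] unfolding Zset_def by auto
      qed
    qed
  qed

  have YE: "S \<inter> Yset L = Yi L i"
  proof (rule set_eqI)
    fix x
    show "x \<in> S \<inter> Yset L \<longleftrightarrow> x \<in> Yi L i"
    proof
      assume x: "x \<in> S \<inter> Yset L"
      then have xS: "x \<in> S" by blast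
      from x consider (a) k l where "x = YI 1 0 k l" "k < l" "l < L"
        | (b) k l where "x = YI 0 1 k l" "k < l" "l < L"
        | (c) k l where "x = YI 1 1 k l" "k < l" "l < L"
        | (d) k where "x = YI 1 1 k k" "k < L"
        unfolding Yset_def by blast
      then show "x \<in> Yi L i"
      proof cases
        case (a k l)
        then have "s k" "\<not> s l" using y[OF a(2,3)] xS by auto
        then have "bitd i k = 1" "bitd i l = 0" using bit a by auto
        then show ?thesis unfolding Yi_def using a by force
      next
        case (b k l)
        then have "\<not> s k" "s l" using y[OF b(2,3)] xS by auto
        then have "bitd i k = 0" "bitd i l = 1" using bit b by auto
        then show ?thesis unfolding Yi_def using b by force
      next
        case (c k l)
        then have "s k" "s l" using y[OF c(2,3)] xS by auto
        then have "bitd i k = 1" "bitd i l = 1" using bit c by auto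
        then show ?thesis unfolding Yi_def using c by force
      next
        case (d k)
        then have "s k" using yd xS by auto
        then have "bitd i k = 1" using bit d by auto
        then show ?thesis unfolding Yi_def using d by force
      qed
    next
      assume "x \<in> Yi L i"
      then obtain k l where xk: "x = YI (bitd i k) (bitd i l) k l" "k \<le> l" "l < L"
          "(bitd i k, bitd i l) \<noteq> (0, 0)" unfolding Yi_def by blast
      have kL: "k < L" using xk by simp
      show "x \<in> S \<inter> Yset L"
      proof (cases "k = l")
        case True
        then have sk: "s k" using xk bit[OF kL] by (auto split: if_splits)
        then have "x = YI 1 1 k k" using xk True bit[OF kL] by simp
        then show ?thesis using yd[OF kL] sk kL unfolding Yset_def by blast
      next
        case False
        then have kl: "k < l" using xk by simp
        have bk: "bitd i k = (if s k then 1 else 0)" using bit[OF kL] .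
        have bl: "bitd i l = (if s l then 1 else 0)" using bit[OF xk(3)] .
        note yy = y[OF kl xk(3)]
        show ?thesis
        proof (cases "s k")
          case True
          show ?thesis
          proof (cases "s l")
            case True
            then show ?thesis using \<open>s k\<close> xk(1) bk bl yy kl xk(3) unfolding Yset_def by auto
          next
            case False
            then show ?thesis using \<open>s k\<close> xk(1) bk bl yy kl xk(3) unfolding Yset_def by auto
          qed
        next
          case False
          then have "s l" using xk(4) bk bl by (auto split: if_splits)
          then show ?thesis using False xk(1) bk bl yy kl xk(3) unfolding Yset_def by auto
        qed
      qed
    qed
  qed
  show ?thesis using bs YE ZE t by blast
qed

end
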